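(* Let $n_1\ge n_2\ge n_3\ge0$ be integers with $n_1\ge2$ and $n_1+n_2+n_3\ge3$, and let $T$ be a uniformly random standard Young tableau of shape $(n_1,n_2,n_3)$ (zero parts omitted). Then $$\Pr(T_{1,2}=3)=\frac{n_1^2n_2+n_1^2n_3+n_1n_2^2+2n_1n_2n_3+n_1n_3^2+n_2^2n_3+n_2n_3^2-n_1n_2-n_1n_3+n_2^2-n_2n_3+2n_3^2-2n_2-6n_3}{(n_1+n_2+n_3-2)(n_1+n_2+n_3-1)(n_1+n_2+n_3)}.$$
   Context: A standard Young tableau of shape $\lambda=(\lambda_1,\dots,\lambda_k)$, $\lambda_1\ge\dots\ge\lambda_k>0$, with $N=\sum\lambda_i$ cells is a bijective filling $T$ of the cells $[a,b]$ ($1\le a\le k$, $1\le b\le\lambda_a$; row $a$, column $b$) by $\{1,\dots,N\}$ that increases along each row and down each column. $T_{a,b}$ denotes the entry in cell $[a,b]$. *)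

theory Defs
  imports Complex_Main
begin

text \<open>A partition is a list of positive, weakly decreasing parts.
 Cells are pairs (row a, column b), 1-indexed: 1 \<le> a \<le> k, 1 \<le> b \<le> lambda_a.\<close>

definition is_partition :: "nat list \<Rightarrow> bool" where
  "is_partition lam \<longleftrightarrow> sorted_wrt (\<ge>) lam \<and> (\<forall>x\<in>set lam. x > 0)"

definition cells :: "nat list \<Rightarrow> (nat \<times> nat) set" where
  "cells lam = {(a, b). 1 \<le> a \<and> a \<le> length lam \<and> 1 \<le> b \<and> b \<le> lam ! (a - 1)}"

text \<open>Standard Young tableaux of shape lam, as functions on cells (set to 0 outside
 the diagram so that the set of tableaux is finite).\<close>

definition SYT :: "nat list \<Rightarrow> ((nat \<times> nat) \<Rightarrow> nat) set" where
  "SYT lam = {T. bij_betw T (cells lam) {1..sum_list lam}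
      \<and> (\<forall>a b b'. (a, b) \<in> cells lam \<longrightarrow> (a, b') \<in> cells lam \<longrightarrow> b < b' \<longrightarrow> T (a, b) < T (a, b'))
      \<and> (\<forall>a a' b. (a, b) \<in> cells lam \<longrightarrow> (a', b) \<in> cells lam \<longrightarrow> a < a' \<longrightarrow> T (a, b) < T (a', b))
      \<and> (\<forall>c. c \<notin> cells lam \<longrightarrow> T c = 0)}"

definition syt_prob :: "nat list \<Rightarrow> (((nat \<times> nat) \<Rightarrow> nat) \<Rightarrow> bool) \<Rightarrow> real" where
  "syt_prob lam P = real (card {T \<in> SYT lam. P T}) / real (card (SYT lam))"

end

theory Submission imports Defs begin

definition Y :: "(nat\<times>nat) set \<Rightarrow> nat \<Rightarrow> ((nat \<times> nat) \<Rightarrow> nat) set" where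
"Y D n = {T. bij_betw T D {1..n}
      \<and> (\<forall>a b b'. (a, b) \<in> D \<longrightarrow> (a, b') \<in> D \<longrightarrow> b < b' \<longrightarrow> T (a, b) < T (a, b'))
      \<and> (\<forall>a a' b. (a, b) \<in> D \<longrightarrow> (a', b) \<in> D \<longrightarrow> a < a' \<longrightarrow> T (a, b) < T (a', b))
      \<and> (\<forall>c. c \<notin> D \<longrightarrow> T c = 0)}"

lemma SYT_Y: "SYT lam = Y (cells lam) (sum_list lam)" unfolding SYT_def Y_def by simp

definition corner :: "(nat\<times>nat) set \<Rightarrow> nat\<times>nat \<Rightarrow> bool" where
"corner D x \<longleftrightarrow> x \<in> D \<and> (\<forall>j. (fst x, j) \<in> D \<longrightarrow> j \<le> snd x) \<and> (\<forall>i. (i, snd x) \<in> D \<longrightarrow> i \<le> fst x)"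

lemma Y_finite: assumes "finite D" shows "finite (Y D n)"
proof -
  have "Y D n \<subseteq> {f. \<forall>x. (x \<in> D \<longrightarrow> f x \<in> {1..n}) \<and> (x \<notin> D \<longrightarrow> f x = 0)}"
    by (auto simp: Y_def bij_betw_def)
  moreover have "finite {f. \<forall>x. (x \<in> D \<longrightarrow> f x \<in> {1..n}) \<and> (x \<notin> D \<longrightarrow> (f::(nat\<times>nat)\<Rightarrow>nat) x = 0)}"
    by (rule finite_set_of_finite_funs) (use assms in auto)
  ultimately show ?thesis by (rule finite_subset)
qed

lemma Y_zero: "T \<in> Y D n \<Longrightarrow> c \<notin> D \<Longrightarrow> T c = 0"
  unfolding Y_def by blast

lemma Y_range: "T \<in> Y D n \<Longrightarrow> x \<in> D \<Longrightarrow> T x \<in> {1..n}"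
  unfolding Y_def bij_betw_def by auto

lemma Y_split:
  assumes "finite D" "1 \<le> n"
  shows "card {T\<in>Y D n. Q T} = (\<Sum>x\<in>D. card {T\<in>Y D n. T x = n \<and> Q T})"
proof -
  have eq: "{T\<in>Y D n. Q T} = (\<Union>x\<in>D. {T\<in>Y D n. T x = n \<and> Q T})"
  proof (rule set_eqI, rule iffI)
    fix T assume "T \<in> {T\<in>Y D n. Q T}"
    then have T: "T \<in> Y D n" "Q T" by auto
    then have "n \<in> T ` D" using assms(2) unfolding Y_def bij_betw_def by auto
    then obtain x where "x \<in> D" "T x = n" by auto
    then show "T \<in> (\<Union>x\<in>D. {T\<in>Y D n. T x = n \<and> Q T})" using T by auto
  qed auto
  show ?thesis unfolding eq
  proof (rule card_UN_disjoint)
    show "finite D" by fact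
    show "\<forall>i\<in>D. finite {T \<in> Y D n. T i = n \<and> Q T}" using Y_finite[OF assms(1)] by auto
    show "\<forall>i\<in>D. \<forall>j\<in>D. i \<noteq> j \<longrightarrow> {T \<in> Y D n. T i = n \<and> Q T} \<inter> {T \<in> Y D n. T j = n \<and> Q T} = {}"
      unfolding Y_def bij_betw_def inj_on_def by auto
  qed
qed

lemma Y_noncorner:
  assumes "\<not> corner D x" "1 \<le> n"
  shows "{T\<in>Y D n. T x = n \<and> Q T} = {}"
proof (rule ccontr)
  assume "{T\<in>Y D n. T x = n \<and> Q T} \<noteq> {}"
  then obtain T where T: "T \<in> Y D n" "T x = n" by auto
  obtain p q where x: "x = (p,q)" by (cases x)
  have xD: "x \<in> D"
  proof (rule ccontr)
    assume "x \<notin> D" then have "T x = 0" using Y_zero[OF T(1)] by auto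
    then show False using T(2) assms(2) by simp
  qed
  from assms(1) xD x consider j where "(p,j) \<in> D" "q < j" | i where "(i,q) \<in> D" "p < i"
    unfolding corner_def by force
  then show False
  proof cases
    case 1
    then have "T (p,q) < T (p,j)" using T(1) xD x unfolding Y_def by auto
    moreover have "T (p,j) \<le> n" using Y_range[OF T(1) 1(1)] by auto
    ultimately show False using T(2) x by simp
  next
    case 2
    then have "T (p,q) < T (i,q)" using T(1) xD x unfolding Y_def by auto
    moreover have "T (i,q) \<le> n" using Y_range[OF T(1) 2(1)] by auto
    ultimately show False using T(2) x by simp
  qed
qed

lemma Y_remove:
  assumes "T \<in> Y D n" "T x = n" "x \<in> D" "1 \<le> n"
  shows "T(x:=0) \<in> Y (D-{x}) (n-1)"
proof -
  have b: "bij_betw T D {1..n}" using assms(1) unfolding Y_def by auto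
  have "bij_betw T {x} {n}" using assms(2) by (simp add: bij_betw_def)
  then have "bij_betw T (D - {x}) ({1..n} - {n})"
    using bij_betw_DiffI[OF b] assms by auto
  moreover have "{1..n} - {n} = {1..n-1}" using assms(4) by auto
  ultimately have "bij_betw T (D - {x}) {1..n-1}" by simp
  then have "bij_betw (T(x:=0)) (D - {x}) {1..n-1}"
    by (rule bij_betw_cong[THEN iffD1, rotated]) auto
  then show ?thesis using assms(1) unfolding Y_def by auto
qed

lemma Y_add:
  assumes "T \<in> Y (D-{x}) (n-1)" "corner D x" "1 \<le> n"
  shows "T(x:=n) \<in> Y D n"
proof -
  have xD: "x \<in> D" using assms(2) unfolding corner_def by auto
  have b: "bij_betw T (D-{x}) {1..n-1}" using assms(1) unfolding Y_def by auto
  then have b1: "bij_betw (T(x:=n)) (D-{x}) {1..n-1}"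
    by (rule bij_betw_cong[THEN iffD1, rotated]) auto
  have b2: "bij_betw (T(x:=n)) {x} {n}" by (simp add: bij_betw_def)
  have "bij_betw (T(x:=n)) ((D-{x}) \<union> {x}) ({1..n-1} \<union> {n})"
    by (rule bij_betw_combine[OF b1 b2]) auto
  moreover have "(D-{x}) \<union> {x} = D" using xD by auto
  moreover have "{1..n-1} \<union> {n} = {1..n}" using assms(3) by auto
  ultimately have bb: "bij_betw (T(x:=n)) D {1..n}" by simp
  have rng: "\<And>c. c \<in> D - {x} \<Longrightarrow> T c \<le> n-1" using Y_range[OF assms(1)] by auto
  have m1: "\<forall>a b b'. (a, b) \<in> D \<longrightarrow> (a, b') \<in> D \<longrightarrow> b < b' \<longrightarrow> (T(x:=n)) (a, b) < (T(x:=n)) (a, b')"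
  proof (intro allI impI)
    fix a b b' assume h: "(a, b) \<in> D" "(a, b') \<in> D" "b < b'"
    show "(T(x:=n)) (a, b) < (T(x:=n)) (a, b')"
    proof (cases "(a,b) = x")
      case True then show ?thesis using assms(2) h unfolding corner_def by auto
    next
      case F1: False
      show ?thesis
      proof (cases "(a,b') = x")
        case True
        then show ?thesis using F1 rng[of "(a,b)"] h assms(3) by auto
      next
        case False
        then show ?thesis using F1 h assms(1) unfolding Y_def by auto
      qed
    qed
  qed
  have m2: "\<forall>a a' b. (a, b) \<in> D \<longrightarrow> (a', b) \<in> D \<longrightarrow> a < a' \<longrightarrow> (T(x:=n)) (a, b) < (T(x:=n)) (a', b)"
  proof (intro allI impI)
    fix a a' b assume h: "(a, b) \<in> D" "(a', b) \<in> D" "a < a'"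
    show "(T(x:=n)) (a, b) < (T(x:=n)) (a', b)"
    proof (cases "(a,b) = x")
      case True then show ?thesis using assms(2) h unfolding corner_def by auto
    next
      case F1: False
      show ?thesis
      proof (cases "(a',b) = x")
        case True
        then show ?thesis using F1 rng[of "(a,b)"] h assms(3) by auto
      next
        case False
        then show ?thesis using F1 h assms(1) unfolding Y_def by auto
      qed
    qed
  qed
  have "\<forall>c. c \<notin> D \<longrightarrow> (T(x:=n)) c = 0" using assms(1) xD unfolding Y_def by auto
  then show ?thesis using bb m1 m2 unfolding Y_def by auto
qed

lemma Y_corner:
  assumes "corner D x" "1 \<le> n" "\<forall>T. T x = n \<longrightarrow> (Q T \<longleftrightarrow> Q (T(x:=0)))"
  shows "card {T\<in>Y D n. T x = n \<and> Q T} = card {T\<in>Y (D-{x}) (n-1). Q T}"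
proof (rule bij_betw_same_card)
  have xD: "x \<in> D" using assms(1) unfolding corner_def by auto
  show "bij_betw (\<lambda>T. T(x:=0)) {T\<in>Y D n. T x = n \<and> Q T} {T\<in>Y (D-{x}) (n-1). Q T}"
  proof (rule bij_betw_byWitness[where f' = "\<lambda>T. T(x:=n)"])
    show "\<forall>T\<in>{T \<in> Y D n. T x = n \<and> Q T}. (T(x := 0))(x := n) = T" by auto
    show "\<forall>T\<in>{T \<in> Y (D - {x}) (n - 1). Q T}. (T(x := n))(x := 0) = T"
      using Y_zero[of _ "D-{x}" "n-1" x] by auto
    show "(\<lambda>T. T(x := 0)) ` {T \<in> Y D n. T x = n \<and> Q T} \<subseteq> {T \<in> Y (D - {x}) (n - 1). Q T}"
    proof
      fix S assume "S \<in> (\<lambda>T. T(x := 0)) ` {T \<in> Y D n. T x = n \<and> Q T}"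
      then obtain T where T: "T \<in> Y D n" "T x = n" "Q T" "S = T(x:=0)" by auto
      show "S \<in> {T \<in> Y (D - {x}) (n - 1). Q T}" using Y_remove[OF T(1,2) xD assms(2)] T assms(3) by auto
    qed
    show "(\<lambda>T. T(x := n)) ` {T \<in> Y (D - {x}) (n - 1). Q T} \<subseteq> {T \<in> Y D n. T x = n \<and> Q T}"
    proof
      fix S assume "S \<in> (\<lambda>T. T(x := n)) ` {T \<in> Y (D - {x}) (n - 1). Q T}"
      then obtain T where T: "T \<in> Y (D - {x}) (n - 1)" "Q T" "S = T(x:=n)" by auto
      have "T x = 0" using Y_zero[OF T(1)] by auto
      then have "(T(x:=n))(x:=0) = T" by auto
      then have "Q S" using T assms(3) by (metis fun_upd_same)
      then show "S \<in> {T \<in> Y D n. T x = n \<and> Q T}" using Y_add[OF T(1) assms(1,2)] T by auto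
    qed
  qed
qed

lemma Y_at:
  assumes "1 \<le> n" "\<forall>T. T x = n \<longrightarrow> (Q T \<longleftrightarrow> Q (T(x:=0)))"
  shows "card {T\<in>Y D n. T x = n \<and> Q T} = (if corner D x then card {T\<in>Y (D-{x}) (n-1). Q T} else 0)"
proof (cases "corner D x")
  case True then show ?thesis using Y_corner[OF True assms(1,2)] by simp
next
  case False then show ?thesis using Y_noncorner[OF False assms(1), of Q] by (simp only: card.empty if_False)
qed


definition D3 :: "nat \<Rightarrow> nat \<Rightarrow> nat \<Rightarrow> (nat\<times>nat) set" where
"D3 a b c = {(i,j). 1 \<le> j \<and> ((i=1 \<and> j \<le> a) \<or> (i=2 \<and> j \<le> b) \<or> (i=3 \<and> j \<le> c))}"

lemma cells3:
  assumes "c \<le> b" "b \<le> a"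
  shows "cells (filter (\<lambda>x. x>0) [a,b,c]) = D3 a b c"
proof (cases "c = 0")
  case c0: True
  show ?thesis
  proof (cases "b = 0")
    case b0: True
    show ?thesis
    proof (cases "a = 0")
      case True then show ?thesis using b0 c0 by (auto simp: cells_def D3_def)
    next
      case False then show ?thesis using b0 c0 by (auto simp: cells_def D3_def)
    qed
  next
    case False
    then have "a > 0" using assms by auto
    then show ?thesis using False c0 unfolding cells_def D3_def
      by (auto simp: nth_Cons' le_Suc_eq)
  qed
next
  case False
  then have "a > 0" "b > 0" using assms by auto
  then show ?thesis using False unfolding cells_def D3_def
    by (auto simp: nth_Cons' le_Suc_eq numeral_3_eq_3)
qed

lemma sum3: "sum_list (filter (\<lambda>x. x>0) [a,b,c]) = a + b + (c::nat)"
  by auto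

lemma D3_finite: "finite (D3 a b c)"
proof -
  have "D3 a b c \<subseteq> {1..3} \<times> {1..a+b+c}" unfolding D3_def by auto
  then show ?thesis by (rule finite_subset) auto
qed

definition cnt :: "(((nat \<times> nat) \<Rightarrow> nat) \<Rightarrow> bool) \<Rightarrow> nat \<Rightarrow> nat \<Rightarrow> nat \<Rightarrow> nat" where
"cnt Q a b c = card {T\<in>Y (D3 a b c) (a+b+c). Q T}"

lemma corner1: "c \<le> b \<Longrightarrow> b \<le> a \<Longrightarrow> corner (D3 a b c) (1,a) \<longleftrightarrow> b < a"
  unfolding corner_def D3_def by auto
lemma corner2: "c \<le> b \<Longrightarrow> b \<le> a \<Longrightarrow> corner (D3 a b c) (2,b) \<longleftrightarrow> c < b"
  unfolding corner_def D3_def by auto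
lemma corner3: "c \<le> b \<Longrightarrow> b \<le> a \<Longrightarrow> corner (D3 a b c) (3,c) \<longleftrightarrow> 0 < c"
  unfolding corner_def D3_def by auto
lemma corner_other: assumes "x \<notin> {(1,a),(2,b),(3,c)}" shows "\<not> corner (D3 a b c) x"
proof
  assume C: "corner (D3 a b c) x"
  obtain i j where x: "x = (i,j)" by (cases x)
  have xD: "(i,j) \<in> D3 a b c" using C x unfolding corner_def by auto
  have row: "\<And>j'. (i,j') \<in> D3 a b c \<Longrightarrow> j' \<le> j" using C x unfolding corner_def by auto
  consider "i = 1" "1 \<le> j" "j \<le> a" | "i = 2" "1 \<le> j" "j \<le> b" | "i = 3" "1 \<le> j" "j \<le> c"
    using xD unfolding D3_def by auto
  then show False
  proof cases
    case 1 then have "(i,a) \<in> D3 a b c" unfolding D3_def by auto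
    then have "a \<le> j" by (rule row)
    then show False using 1 assms x by auto
  next
    case 2 then have "(i,b) \<in> D3 a b c" unfolding D3_def by auto
    then have "b \<le> j" by (rule row)
    then show False using 2 assms x by auto
  next
    case 3 then have "(i,c) \<in> D3 a b c" unfolding D3_def by auto
    then have "c \<le> j" by (rule row)
    then show False using 3 assms x by auto
  qed
qed

lemma diff1: "b < a \<Longrightarrow> D3 a b c - {(1,a)} = D3 (a-1) b c"
  unfolding D3_def by auto
lemma diff2: "c < b \<Longrightarrow> D3 a b c - {(2,b)} = D3 a (b-1) c"
  unfolding D3_def by auto
lemma diff3: "0 < c \<Longrightarrow> D3 a b c - {(3,c)} = D3 a b (c-1)"
  unfolding D3_def by auto

lemma rec3:
  assumes "c \<le> b" "b \<le> a" "1 \<le> a+b+c" "\<forall>T x. T x = a+b+c \<longrightarrow> (Q T \<longleftrightarrow> Q (T(x:=0)))"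
  shows "cnt Q a b c = (if b<a then cnt Q (a-1) b c else 0) + (if c<b then cnt Q a (b-1) c else 0)
     + (if 0<c then cnt Q a b (c-1) else 0)"
proof -
  define D where "D = D3 a b c"
  define n where "n = a+b+c"
  define h where "h x = card {T\<in>Y D n. T x = n \<and> Q T}" for x
  define E where "E = {(1::nat,a),(2::nat,b),(3::nat,c)}"
  have hx: "h x = (if corner D x then card {T\<in>Y (D-{x}) (n-1). Q T} else 0)" for x
    unfolding h_def n_def using Y_at[OF assms(3)] assms(4) by blast
  have hn: "x \<notin> D \<Longrightarrow> h x = 0" for x unfolding hx corner_def by auto
  have ho: "x \<notin> E \<Longrightarrow> h x = 0" for x unfolding hx D_def E_def using corner_other[of x a b c] by auto
  have "cnt Q a b c = (\<Sum>x\<in>D. h x)" unfolding cnt_def h_def D_def n_def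
    by (rule Y_split[OF D3_finite assms(3)])
  also have "\<dots> = (\<Sum>x\<in>D \<union> E. h x)"
  proof (rule sum.mono_neutral_left)
    show "finite (D \<union> E)" by (simp add: D_def D3_finite E_def)
    show "D \<subseteq> D \<union> E" by auto
    show "\<forall>i\<in>D \<union> E - D. h i = 0" using hn by blast
  qed
  also have "\<dots> = (\<Sum>x\<in>E. h x)"
  proof (rule sum.mono_neutral_right)
    show "finite (D \<union> E)" by (simp add: D_def D3_finite E_def)
    show "E \<subseteq> D \<union> E" by auto
    show "\<forall>i\<in>D \<union> E - E. h i = 0" using ho by blast
  qed
  also have "\<dots> = h (1,a) + h (2,b) + h (3,c)" unfolding E_def by simp
  also have "h (1,a) = (if b<a then cnt Q (a-1) b c else 0)"
    using corner1[OF assms(1,2)] diff1[of b a c] unfolding hx D_def cnt_def n_def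
    by (auto simp: Suc_diff_Suc)
  also have "h (2,b) = (if c<b then cnt Q a (b-1) c else 0)"
    using corner2[OF assms(1,2)] diff2[of c b a] unfolding hx D_def cnt_def n_def
    by (auto simp: Suc_diff_Suc)
  also have "h (3,c) = (if 0<c then cnt Q a b (c-1) else 0)"
    using corner3[OF assms(1,2)] diff3[of c a b] unfolding hx D_def cnt_def n_def
    by (auto simp: Suc_diff_Suc)
  finally show ?thesis .
qed

definition num :: "real\<Rightarrow>real\<Rightarrow>real\<Rightarrow>real" where
 "num x y z = x^2*y + x^2*z + x*y^2 + 2*x*y*z + x*z^2 + y^2*z + y*z^2 - x*y - x*z + y^2 - y*z
        + 2*z^2 - 2*y - 6*z"
definition Pf :: "real\<Rightarrow>real\<Rightarrow>real\<Rightarrow>real" where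
 "Pf x y z = num x y z / ((x + y + z - 2) * (x + y + z - 1) * (x + y + z))"
definition bs :: "real\<Rightarrow>real\<Rightarrow>real\<Rightarrow>real" where "bs a b c = (a-b+1)*(a-c+2)*(b-c+1)"
definition t1 :: "real\<Rightarrow>real\<Rightarrow>real\<Rightarrow>real" where "t1 a b c = (a+2)*(a-b)*(a-c+1)*(b-c+1)"
definition t2 :: "real\<Rightarrow>real\<Rightarrow>real\<Rightarrow>real" where "t2 a b c = (b+1)*(a-b+2)*(a-c+2)*(b-c)"
definition t3 :: "real\<Rightarrow>real\<Rightarrow>real\<Rightarrow>real" where "t3 a b c = c*(a-b+1)*(a-c+3)*(b-c+2)"

lemma polyF: "bs a b c * (a+b+c) = t1 a b c + t2 a b c + t3 a b c"
  unfolding bs_def t1_def t2_def t3_def by algebra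

lemma polyG: "num a b c * bs a b c * (a+b+c-3) = t1 a b c * num (a-1) b c + t2 a b c * num a (b-1) c + t3 a b c * num a b (c-1)"
  unfolding bs_def t1_def t2_def t3_def num_def by algebra

lemma ratG:
  assumes "a+b+c \<noteq> 0" "a+b+c \<noteq> 1" "a+b+c \<noteq> 2" "a+b+c \<noteq> 3"
  shows "Pf a b c * bs a b c = (Pf (a-1) b c * t1 a b c + Pf a (b-1) c * t2 a b c + Pf a b (c-1) * t3 a b c) / (a+b+c)"
proof -
  define s where "s = a+b+c"
  have s0: "s \<noteq> 0" "s-1 \<noteq> 0" "s-2 \<noteq> 0" "s-3 \<noteq> 0" using assms unfolding s_def by auto
  have P0: "Pf a b c = num a b c / ((s-2)*(s-1)*s)" unfolding Pf_def s_def by simp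
  have P1: "Pf (a-1) b c = num (a-1) b c / ((s-3)*(s-2)*(s-1))" unfolding Pf_def s_def
    by (simp add: algebra_simps)
  have P2: "Pf a (b-1) c = num a (b-1) c / ((s-3)*(s-2)*(s-1))" unfolding Pf_def s_def
    by (simp add: algebra_simps)
  have P3: "Pf a b (c-1) = num a b (c-1) / ((s-3)*(s-2)*(s-1))" unfolding Pf_def s_def
    by (simp add: algebra_simps)
  have pg: "num a b c * bs a b c * (s-3) = t1 a b c * num (a-1) b c + t2 a b c * num a (b-1) c + t3 a b c * num a b (c-1)"
    using polyG[of a b c] unfolding s_def .
  define D where "D = (s-3)*(s-2)*(s-1)"
  have D0: "D \<noteq> 0" using s0 unfolding D_def by simp
  have "(Pf (a-1) b c * t1 a b c + Pf a (b-1) c * t2 a b c + Pf a b (c-1) * t3 a b c) / s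
     = (t1 a b c * num (a-1) b c + t2 a b c * num a (b-1) c + t3 a b c * num a b (c-1)) / (D * s)"
    unfolding P1 P2 P3 D_def[symmetric] by (simp add: add_divide_distrib mult.commute)
  also have "\<dots> = num a b c * bs a b c * (s-3) / (D * s)" using pg by simp
  also have "\<dots> = num a b c * bs a b c / ((s-2)*(s-1)*s)"
  proof -
    have "D * s = (s-3) * ((s-2)*(s-1)*s)" unfolding D_def by (simp add: algebra_simps)
    moreover have "num a b c * bs a b c * (s-3) = (s-3) * (num a b c * bs a b c)" by simp
    ultimately show ?thesis using s0 by (metis nonzero_mult_divide_mult_cancel_left)
  qed
  finally show ?thesis unfolding s_def[symmetric] P0 by simp
qed

definition K :: "nat \<Rightarrow> nat \<Rightarrow> nat \<Rightarrow> real" where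
"K a b c = fact (a+b+c) / (fact (a+2) * fact (b+1) * fact c)"

definition Fc :: "nat \<Rightarrow> nat \<Rightarrow> nat \<Rightarrow> real" where
"Fc a b c = K a b c * bs (real a) (real b) (real c)"

lemma Kaux1: "(p::real) \<noteq> 0 \<Longrightarrow> A \<noteq> 0 \<Longrightarrow> B \<noteq> 0 \<Longrightarrow> C \<noteq> 0 \<Longrightarrow>
   F / (A*B*C) * q = (q * F) / (p*A*B*C) * p"
  by (simp add: field_simps)
lemma Kaux2: "(p::real) \<noteq> 0 \<Longrightarrow> A \<noteq> 0 \<Longrightarrow> B \<noteq> 0 \<Longrightarrow> C \<noteq> 0 \<Longrightarrow>
   F / (A*B*C) * q = (q * F) / (A*(p*B)*C) * p"
  by (simp add: field_simps)
lemma Kaux3: "(p::real) \<noteq> 0 \<Longrightarrow> A \<noteq> 0 \<Longrightarrow> B \<noteq> 0 \<Longrightarrow> C \<noteq> 0 \<Longrightarrow>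
   F / (A*B*C) * q = (q * F) / (A*B*(p*C)) * p"
  by (simp add: field_simps)

lemma K1: "K a b c * real (Suc (a+b+c)) = K (Suc a) b c * (real a + 3)"
proof -
  define F where "F = (fact (a+b+c)::real)"
  define A where "A = (fact (a+2)::real)"
  define B where "B = (fact (b+1)::real)"
  define C where "C = (fact c :: real)"
  have nz: "A \<noteq> 0" "B \<noteq> 0" "C \<noteq> 0" unfolding F_def A_def B_def C_def by simp_all
  have e: "Suc a + b + c = Suc (a+b+c)" "Suc a + 2 = Suc (a+2)" by simp_all
  have k1: "K (Suc a) b c = (real (Suc (a+b+c)) * F) / ((real (Suc (a+2))) * A * B * C)"
    unfolding K_def e F_def A_def B_def C_def by (simp only: fact_Suc)
  have k0: "K a b c = F / (A*B*C)" unfolding K_def F_def A_def B_def C_def by simp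
  have r: "real (Suc (a+2)) = real a + 3" by simp
  have p: "real a + 3 \<noteq> 0" by simp
  show ?thesis unfolding k1 k0 r using p nz by (rule Kaux1)
qed

lemma K2: "K a b c * real (Suc (a+b+c)) = K a (Suc b) c * (real b + 2)"
proof -
  define F where "F = (fact (a+b+c)::real)"
  define A where "A = (fact (a+2)::real)"
  define B where "B = (fact (b+1)::real)"
  define C where "C = (fact c :: real)"
  have nz: "A \<noteq> 0" "B \<noteq> 0" "C \<noteq> 0" unfolding F_def A_def B_def C_def by simp_all
  have e: "a + Suc b + c = Suc (a+b+c)" "Suc b + 1 = Suc (b+1)" by simp_all
  have k1: "K a (Suc b) c = (real (Suc (a+b+c)) * F) / (A * (real (Suc (b+1)) * B) * C)"
    unfolding K_def e F_def A_def B_def C_def by (simp only: fact_Suc)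
  have k0: "K a b c = F / (A*B*C)" unfolding K_def F_def A_def B_def C_def by simp
  have r: "real (Suc (b+1)) = real b + 2" by simp
  have p: "real b + 2 \<noteq> 0" by simp
  show ?thesis unfolding k1 k0 r using p nz by (rule Kaux2)
qed

lemma K3: "K a b c * real (Suc (a+b+c)) = K a b (Suc c) * (real c + 1)"
proof -
  define F where "F = (fact (a+b+c)::real)"
  define A where "A = (fact (a+2)::real)"
  define B where "B = (fact (b+1)::real)"
  define C where "C = (fact c :: real)"
  have nz: "A \<noteq> 0" "B \<noteq> 0" "C \<noteq> 0" unfolding F_def A_def B_def C_def by simp_all
  have e: "a + b + Suc c = Suc (a+b+c)" by simp_all
  have k1: "K a b (Suc c) = (real (Suc (a+b+c)) * F) / (A * B * (real (Suc c) * C))"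
    unfolding K_def e F_def A_def B_def C_def by (simp only: fact_Suc)
  have k0: "K a b c = F / (A*B*C)" unfolding K_def F_def A_def B_def C_def by simp
  have r: "real (Suc c) = real c + 1" by simp
  have p: "real c + 1 \<noteq> 0" by simp
  show ?thesis unfolding k1 k0 r using p nz by (rule Kaux3)
qed

lemma E1:
  assumes "c \<le> b" "b \<le> a" "1 \<le> a+b+c"
  shows "(if b<a then Fc (a-1) b c else 0) = K a b c * t1 a b c / real (a+b+c)"
proof (cases "b < a")
  case True
  then obtain a' where a: "a = Suc a'" by (cases a) auto
  have N: "real (a+b+c) \<noteq> 0" using assms by simp
  have k: "K a' b c * real (a+b+c) = K a b c * (real a + 2)" using K1[of a' b c] a by simp
  have k': "K a' b c = K a b c * (real a + 2) / real (a+b+c)" using k N by (simp add: field_simps)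
  have t: "t1 a b c = (real a + 2) * bs (real a') b c" unfolding t1_def bs_def a by (simp add: algebra_simps)
  have "Fc (a-1) b c = K a b c * (real a + 2) / real (a+b+c) * bs (real a') b c" using k' unfolding Fc_def a by simp
  also have "\<dots> = K a b c * t1 a b c / real (a+b+c)" unfolding t by simp
  finally show ?thesis using True by simp
next
  case False
  then have "a = b" using assms by simp
  then show ?thesis unfolding t1_def by simp
qed

lemma E2:
  assumes "c \<le> b" "b \<le> a" "1 \<le> a+b+c"
  shows "(if c<b then Fc a (b-1) c else 0) = K a b c * t2 a b c / real (a+b+c)"
proof (cases "c < b")
  case True
  then obtain b' where b: "b = Suc b'" by (cases b) auto
  have N: "real (a+b+c) \<noteq> 0" using assms by simp
  have k: "K a b' c * real (a+b+c) = K a b c * (real b + 1)" using K2[of a b' c] b by simp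
  have k': "K a b' c = K a b c * (real b + 1) / real (a+b+c)" using k N by (simp add: field_simps)
  have t: "t2 a b c = (real b + 1) * bs a (real b') c" unfolding t2_def bs_def b by (simp add: algebra_simps)
  have "Fc a (b-1) c = K a b c * (real b + 1) / real (a+b+c) * bs a (real b') c" using k' unfolding Fc_def b by simp
  also have "\<dots> = K a b c * t2 a b c / real (a+b+c)" unfolding t by simp
  finally show ?thesis using True by simp
next
  case False
  then have "c = b" using assms by simp
  then show ?thesis unfolding t2_def by simp
qed

lemma E3:
  assumes "c \<le> b" "b \<le> a" "1 \<le> a+b+c"
  shows "(if 0<c then Fc a b (c-1) else 0) = K a b c * t3 a b c / real (a+b+c)"
proof (cases "0 < c")
  case True
  then obtain c' where c: "c = Suc c'" by (cases c) auto
  have N: "real (a+b+c) \<noteq> 0" using assms by simp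
  have k: "K a b c' * real (a+b+c) = K a b c * real c" using K3[of a b c'] c by simp
  have k': "K a b c' = K a b c * real c / real (a+b+c)" using k N by (simp add: field_simps)
  have t: "t3 a b c = real c * bs a b (real c')" unfolding t3_def bs_def c by (simp add: algebra_simps)
  have "Fc a b (c-1) = K a b c * real c / real (a+b+c) * bs a b (real c')" using k' unfolding Fc_def c by simp
  also have "\<dots> = K a b c * t3 a b c / real (a+b+c)" unfolding t by simp
  finally show ?thesis using True by simp
next
  case False
  then show ?thesis unfolding t3_def by simp
qed

lemma Fc_step:
  assumes "c \<le> b" "b \<le> a" "1 \<le> a+b+c"
  shows "Fc a b c = (if b<a then Fc (a-1) b c else 0) + (if c<b then Fc a (b-1) c else 0)
     + (if 0<c then Fc a b (c-1) else 0)"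
proof -
  have N: "real (a+b+c) \<noteq> 0" using assms by simp
  have "Fc a b c = K a b c * (t1 a b c + t2 a b c + t3 a b c) / real (a+b+c)"
    unfolding Fc_def using polyF[of a b c] N by (simp add: field_simps)
  also have "\<dots> = K a b c * t1 a b c / real (a+b+c) + K a b c * t2 a b c / real (a+b+c) + K a b c * t3 a b c / real (a+b+c)"
    by (simp only: distrib_left add_divide_distrib)
  finally show ?thesis unfolding E1[OF assms] E2[OF assms] E3[OF assms] .
qed

lemma Y_empty: "Y {} 0 = {\<lambda>_. 0}"
  unfolding Y_def by (auto simp: bij_betw_def)

lemma cntF: "c \<le> b \<Longrightarrow> b \<le> a \<Longrightarrow> real (cnt (\<lambda>_. True) a b c) = Fc a b c"
proof (induction "a+b+c" arbitrary: a b c)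
  case 0
  then have z: "a = 0" "b = 0" "c = 0" by auto
  have "D3 0 0 0 = {}" unfolding D3_def by auto
  then have "cnt (\<lambda>_. True) 0 0 0 = 1" unfolding cnt_def using Y_empty by simp
  moreover have "Fc 0 0 0 = 1" unfolding Fc_def K_def bs_def by simp
  ultimately show ?case using z by simp
next
  case (Suc n)
  have ge: "1 \<le> a+b+c" using Suc.hyps(2) by simp
  have r: "cnt (\<lambda>_. True) a b c = (if b<a then cnt (\<lambda>_. True) (a-1) b c else 0) + (if c<b then cnt (\<lambda>_. True) a (b-1) c else 0)
     + (if 0<c then cnt (\<lambda>_. True) a b (c-1) else 0)"
    by (rule rec3[OF Suc.prems ge]) simp
  have i1: "b<a \<Longrightarrow> real (cnt (\<lambda>_. True) (a-1) b c) = Fc (a-1) b c"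
    using Suc.hyps(1)[of "a-1" b c] Suc.prems Suc.hyps(2) by auto
  have i2: "c<b \<Longrightarrow> real (cnt (\<lambda>_. True) a (b-1) c) = Fc a (b-1) c"
    using Suc.hyps(1)[of a "b-1" c] Suc.prems Suc.hyps(2) by auto
  have i3: "0<c \<Longrightarrow> real (cnt (\<lambda>_. True) a b (c-1)) = Fc a b (c-1)"
    using Suc.hyps(1)[of a b "c-1"] Suc.prems Suc.hyps(2) by auto
  have j1: "real (if b<a then cnt (\<lambda>_. True) (a-1) b c else 0) = (if b<a then Fc (a-1) b c else 0)" using i1 by simp
  have j2: "real (if c<b then cnt (\<lambda>_. True) a (b-1) c else 0) = (if c<b then Fc a (b-1) c else 0)" using i2 by simp
  have j3: "real (if 0<c then cnt (\<lambda>_. True) a b (c-1) else 0) = (if 0<c then Fc a b (c-1) else 0)" using i3 by simp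
  show ?case unfolding r Fc_step[OF Suc.prems ge] of_nat_add j1 j2 j3 ..
qed


lemma Fc_pos: "c \<le> b \<Longrightarrow> b \<le> a \<Longrightarrow> Fc a b c > 0"
  unfolding Fc_def K_def bs_def by (auto intro!: mult_pos_pos divide_pos_pos)

lemma shapes3: "c \<le> b \<Longrightarrow> b \<le> a \<Longrightarrow> a+b+c = (3::nat) \<Longrightarrow>
   (a = 3 \<and> b = 0 \<and> c = 0) \<or> (a = 2 \<and> b = 1 \<and> c = 0) \<or> (a = 1 \<and> b = 1 \<and> c = 1)"
  by arith

lemma cntG_base:
  assumes "c \<le> b" "b \<le> a" "a+b+c = 3"
  shows "real (cnt (\<lambda>T. T(1,2) = 3) a b c) = Pf a b c * Fc a b c"
proof -
  have c: "cnt (\<lambda>T. T(1,2) = 3) a b c = (if corner (D3 a b c) (1,2) then card {T\<in>Y (D3 a b c - {(1,2)}) 2. True} else 0)"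
    unfolding cnt_def assms(3) using Y_at[of 3 "(1,2)" "\<lambda>_. True" "D3 a b c"] by simp
  from shapes3[OF assms] consider "a = 3" "b = 0" "c = 0" | "a = 2" "b = 1" "c = 0" | "a = 1" "b = 1" "c = 1" by blast
  then show ?thesis
  proof cases
    case 1
    have "\<not> corner (D3 a b c) (1,2)" unfolding corner_def D3_def 1 by force
    then have "cnt (\<lambda>T. T(1,2) = 3) a b c = 0" unfolding c by simp
    then show ?thesis using 1 by (simp add: Pf_def num_def)
  next
    case 2
    have cr: "corner (D3 a b c) (1,2)" unfolding corner_def D3_def 2 by auto
    have d: "D3 a b c - {(1,2)} = D3 1 1 0" using diff1[of 1 2 0] 2 by simp
    have "real (card {T\<in>Y (D3 1 1 0) 2. True}) = Fc 1 1 0" using cntF[of 0 1 1] unfolding cnt_def by (simp add: numeral_2_eq_2)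
    moreover have "Fc 1 1 0 = 1" by (simp add: Fc_def K_def bs_def fact_numeral)
    moreover have "Pf 2 1 0 * Fc 2 1 0 = 1" by (simp add: Pf_def num_def Fc_def K_def bs_def fact_numeral)
    ultimately show ?thesis unfolding c using cr d 2 by simp
  next
    case 3
    have "\<not> corner (D3 a b c) (1,2)" unfolding corner_def D3_def 3 by auto
    then have "cnt (\<lambda>T. T(1,2) = 3) a b c = 0" unfolding c by simp
    then show ?thesis using 3 by (simp add: Pf_def num_def)
  qed
qed


lemma Gconv:
  assumes "c \<le> b" "b \<le> a" "1 \<le> a+b+c"
  shows "(if b<a then Pf (real (a-1)) b c * Fc (a-1) b c else 0) = Pf (real a - 1) b c * (K a b c * t1 a b c / real (a+b+c))"
    "(if c<b then Pf a (real (b-1)) c * Fc a (b-1) c else 0) = Pf a (real b - 1) c * (K a b c * t2 a b c / real (a+b+c))"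
    "(if 0<c then Pf a b (real (c-1)) * Fc a b (c-1) else 0) = Pf a b (real c - 1) * (K a b c * t3 a b c / real (a+b+c))"
  using E1[OF assms] E2[OF assms] E3[OF assms] by (auto split: if_splits simp: of_nat_diff)

lemma cntG: "c \<le> b \<Longrightarrow> b \<le> a \<Longrightarrow> 3 \<le> a+b+c \<Longrightarrow> real (cnt (\<lambda>T. T(1,2) = 3) a b c) = Pf a b c * Fc a b c"
proof (induction "a+b+c-3" arbitrary: a b c)
  case 0
  then show ?case using cntG_base[of c b a] by simp
next
  case (Suc m)
  let ?G = "\<lambda>T::(nat\<times>nat)\<Rightarrow>nat. T(1,2) = 3"
  have ge: "1 \<le> a+b+c" using Suc.prems by simp
  have N4: "a+b+c \<ge> 4" using Suc.hyps(2) by simp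
  have r: "cnt ?G a b c = (if b<a then cnt ?G (a-1) b c else 0) + (if c<b then cnt ?G a (b-1) c else 0)
     + (if 0<c then cnt ?G a b (c-1) else 0)"
  proof (rule rec3[OF Suc.prems(1,2) ge])
    show "\<forall>T x. T x = a+b+c \<longrightarrow> (T(1,2) = 3 \<longleftrightarrow> (T(x:=0))(1,2) = 3)"
      using N4 by auto
  qed
  have i1: "b<a \<Longrightarrow> real (cnt ?G (a-1) b c) = Pf (real (a-1)) b c * Fc (a-1) b c"
    using Suc.hyps(1)[of "a-1" b c] Suc.prems Suc.hyps(2) by auto
  have i2: "c<b \<Longrightarrow> real (cnt ?G a (b-1) c) = Pf a (real (b-1)) c * Fc a (b-1) c"
    using Suc.hyps(1)[of a "b-1" c] Suc.prems Suc.hyps(2) by auto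
  have i3: "0<c \<Longrightarrow> real (cnt ?G a b (c-1)) = Pf a b (real (c-1)) * Fc a b (c-1)"
    using Suc.hyps(1)[of a b "c-1"] Suc.prems Suc.hyps(2) by auto
  have j1: "real (if b<a then cnt ?G (a-1) b c else 0) = (if b<a then Pf (real (a-1)) b c * Fc (a-1) b c else 0)" using i1 by simp
  have j2: "real (if c<b then cnt ?G a (b-1) c else 0) = (if c<b then Pf a (real (b-1)) c * Fc a (b-1) c else 0)" using i2 by simp
  have j3: "real (if 0<c then cnt ?G a b (c-1) else 0) = (if 0<c then Pf a b (real (c-1)) * Fc a b (c-1) else 0)" using i3 by simp
  have L: "real (cnt ?G a b c) = Pf (real a - 1) b c * (K a b c * t1 a b c / real (a+b+c))
     + Pf a (real b - 1) c * (K a b c * t2 a b c / real (a+b+c)) + Pf a b (real c - 1) * (K a b c * t3 a b c / real (a+b+c))"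
    unfolding r of_nat_add j1 j2 j3 Gconv[OF Suc.prems(1,2) ge] ..
  have nz: "real a + real b + real c \<noteq> 0" "real a + real b + real c \<noteq> 1" "real a + real b + real c \<noteq> 2" "real a + real b + real c \<noteq> 3"
    using N4 by linarith+
  have R: "Pf a b c * bs a b c = (Pf (real a - 1) b c * t1 a b c + Pf a (real b - 1) c * t2 a b c + Pf a b (real c - 1) * t3 a b c) / (real a + real b + real c)"
    by (rule ratG[OF nz])
  have "Pf a b c * Fc a b c = K a b c * (Pf a b c * bs a b c)" unfolding Fc_def by simp
  also have "\<dots> = K a b c * ((Pf (real a - 1) b c * t1 a b c + Pf a (real b - 1) c * t2 a b c + Pf a b (real c - 1) * t3 a b c) / (real a + real b + real c))"
    unfolding R ..
  also have "\<dots> = real (cnt ?G a b c)" unfolding L by (simp add: field_simps add_divide_distrib)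
  finally show ?case by simp
qed

theorem mainTheorem9:
  fixes n1 n2 n3 :: nat
  assumes "n1 \<ge> n2" "n2 \<ge> n3" "n1 \<ge> 2" "n1 + n2 + n3 \<ge> 3"
  shows "syt_prob (filter (\<lambda>x. x > 0) [n1, n2, n3]) (\<lambda>T. T (1, 2) = 3) =
    (let x = real n1; y = real n2; z = real n3 in
      (x^2*y + x^2*z + x*y^2 + 2*x*y*z + x*z^2 + y^2*z + y*z^2 - x*y - x*z + y^2 - y*z
        + 2*z^2 - 2*y - 6*z) / ((x + y + z - 2) * (x + y + z - 1) * (x + y + z)))"
proof -
  have S: "SYT (filter (\<lambda>x. x > 0) [n1, n2, n3]) = Y (D3 n1 n2 n3) (n1+n2+n3)"
    unfolding SYT_Y cells3[OF assms(2,1)] sum3 ..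
  have F: "real (card (SYT (filter (\<lambda>x. x > 0) [n1, n2, n3]))) = Fc n1 n2 n3"
    using cntF[OF assms(2,1)] unfolding S cnt_def by simp
  have G: "real (card {T \<in> SYT (filter (\<lambda>x. x > 0) [n1, n2, n3]). T (1, 2) = 3}) = Pf n1 n2 n3 * Fc n1 n2 n3"
    using cntG[OF assms(2,1,4)] unfolding S cnt_def by simp
  have pos: "Fc n1 n2 n3 \<noteq> 0" using Fc_pos[OF assms(2,1)] by simp
  show ?thesis unfolding syt_prob_def F G using pos by (simp add: Pf_def num_def Let_def)
qed

end
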